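(* Let $X$ be any one of the sequences $F,L,J,j,P,Q$. For integers $a,b,c,d,e$ put $$\Delta=X_{d-a}X_{e-b}-X_{e-a}X_{d-b},\quad \Delta_1=X_{d-c}X_{e-b}-X_{e-c}X_{d-b},\quad \Delta_2=X_{d-a}X_{e-c}-X_{e-a}X_{d-c}.$$ Let $k,m$ be integers. Provided every denominator appearing below is nonzero and, when $k<0$, the base of every power appearing is nonzero: $$\sum_{r=0}^k\left(\frac{\Delta}{\Delta_1}\right)^rX_{m-k(a-c)-b+c+(a-c)r}=\frac{\Delta}{\Delta_2}\left(\frac{\Delta}{\Delta_1}\right)^kX_m-\frac{\Delta_1}{\Delta_2}X_{m-(k+1)(a-c)},$$ $$\sum_{r=0}^k\left(\frac{\Delta}{\Delta_2}\right)^rX_{m-k(b-c)-a+c+(b-c)r}=\frac{\Delta}{\Delta_1}\left(\frac{\Delta}{\Delta_2}\right)^kX_m-\frac{\Delta_2}{\Delta_1}X_{m-(k+1)(b-c)},$$ $$\sum_{r=0}^k\left(\frac{-\Delta_2}{\Delta_1}\right)^rX_{m-k(a-b)+b-c+(a-b)r}=\frac{\Delta_2}{\Delta}\left(\frac{-\Delta_2}{\Delta_1}\right)^kX_m+\frac{\Delta_1}{\Delta}X_{m-(k+1)(a-b)}.$$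
   Context: All sequences are indexed by $n\in\mathbb Z$. Fibonacci numbers $F_n$ and Lucas numbers $L_n$: $F_n=F_{n-1}+F_{n-2}$, $L_n=L_{n-1}+L_{n-2}$ for all $n\in\mathbb Z$, with $F_0=0,F_1=1,L_0=2,L_1=1$ (so $F_{-n}=(-1)^{n-1}F_n$, $L_{-n}=(-1)^nL_n$). Jacobsthal numbers $J_n$ and Jacobsthal–Lucas numbers $j_n$: $J_n=J_{n-1}+2J_{n-2}$, $j_n=j_{n-1}+2j_{n-2}$ for all $n\in\mathbb Z$, with $J_0=0,J_1=1,j_0=2,j_1=1$ (so $J_{-n}=(-1)^{n-1}2^{-n}J_n$, $j_{-n}=(-1)^n2^{-n}j_n$, rational for negative index). Pell numbers $P_n$ and Pell–Lucas numbers $Q_n$: $P_n=2P_{n-1}+P_{n-2}$, $Q_n=2Q_{n-1}+Q_{n-2}$ for all $n\in\mathbb Z$, with $P_0=0,P_1=1,Q_0=2,Q_1=2$ (so $P_{-n}=(-1)^{n-1}P_n$, $Q_{-n}=(-1)^nQ_n$). Summation convention: for an integer $k<0$, $\sum_{r=0}^k f_r$ means $-\sum_{r=k+1}^{-1} f_r$ (in particular it equals $0$ when $k=-1$). *)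

theory Defs
  imports Complex_Main
begin

fun hor_pos :: "real \<Rightarrow> real \<Rightarrow> real \<Rightarrow> real \<Rightarrow> nat \<Rightarrow> real" where
  "hor_pos p q w0 w1 0 = w0"
| "hor_pos p q w0 w1 (Suc 0) = w1"
| "hor_pos p q w0 w1 (Suc (Suc n)) = p * hor_pos p q w0 w1 (Suc n) + q * hor_pos p q w0 w1 n"

text \<open>hor_neg p q w0 w1 n is the value at index -n (backward recursion
  W(i-2) = (W i - p W(i-1)) / q).\<close>
fun hor_neg :: "real \<Rightarrow> real \<Rightarrow> real \<Rightarrow> real \<Rightarrow> nat \<Rightarrow> real" where
  "hor_neg p q w0 w1 0 = w0"
| "hor_neg p q w0 w1 (Suc 0) = (w1 - p * w0) / q"
| "hor_neg p q w0 w1 (Suc (Suc n)) =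
     (hor_neg p q w0 w1 n - p * hor_neg p q w0 w1 (Suc n)) / q"

definition hor :: "real \<Rightarrow> real \<Rightarrow> real \<Rightarrow> real \<Rightarrow> int \<Rightarrow> real" where
  "hor p q w0 w1 n = (if n \<ge> 0 then hor_pos p q w0 w1 (nat n) else hor_neg p q w0 w1 (nat (- n)))"

definition Fib :: "int \<Rightarrow> real" where "Fib = hor 1 1 0 1"
definition Luc :: "int \<Rightarrow> real" where "Luc = hor 1 1 2 1"
definition Jac :: "int \<Rightarrow> real" where "Jac = hor 1 2 0 1"
definition JacL :: "int \<Rightarrow> real" where "JacL = hor 1 2 2 1"
definition Pell :: "int \<Rightarrow> real" where "Pell = hor 2 1 0 1"
definition PellL :: "int \<Rightarrow> real" where "PellL = hor 2 1 2 2"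

definition isum :: "(int \<Rightarrow> real) \<Rightarrow> int \<Rightarrow> real" where
  "isum f k = (if k \<ge> 0 then (\<Sum>r\<in>{0..k}. f r) else - (\<Sum>r\<in>{k+1..-1}. f r))"

end

theory Submission
  imports Defs
begin

definition recs :: "real \<Rightarrow> real \<Rightarrow> (int \<Rightarrow> real) \<Rightarrow> bool" where
  "recs p q Y \<longleftrightarrow> (\<forall>n. Y (n+2) = p * Y (n+1) + q * Y n)"

lemma hor_recs: assumes "q \<noteq> 0" shows "recs p q (hor p q w0 w1)"
  unfolding recs_def
proof
  fix n :: int
  show "hor p q w0 w1 (n+2) = p * hor p q w0 w1 (n+1) + q * hor p q w0 w1 n"
  proof (cases "n \<ge> 0")
    case True
    define j where "j = nat n"
    have j: "n = int j" using True unfolding j_def by simp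
    have "nat (int j + 2) = Suc (Suc j)" "nat (int j + 1) = Suc j" by auto
    then show ?thesis using j by (simp add: hor_def)
  next
    case False
    show ?thesis
    proof (cases "n = -1")
      case True
      then show ?thesis using assms by (simp add: hor_def)
    next
      case False
      define j where "j = nat (- n - 2)"
      have j: "n = - int j - 2" using False \<open>\<not> n \<ge> 0\<close> unfolding j_def by simp
      have e1: "nat (- (- int j - 2)) = Suc (Suc j)" by auto
      have e2: "nat (- (- int j - 2 + 1)) = Suc j" by auto
      show ?thesis
      proof (cases "j = 0")
        case True
        then show ?thesis using j assms e1 e2 by (simp add: hor_def numeral_2_eq_2 field_simps)
      next
        case False
        then have "- int j - 2 + 2 < 0" by simp
        moreover have "nat (- (- int j - 2 + 2)) = j" by simp
        ultimately show ?thesis using j assms e1 e2 by (simp add: hor_def)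
      qed
    qed
  qed
qed

lemma recs_uniq:
  assumes "recs p q Y" "recs p q Z" "q \<noteq> 0" "Y 0 = Z 0" "Y 1 = Z 1"
  shows "Y n = Z n"
proof -
  have Y: "\<And>n. Y (n+2) = p * Y (n+1) + q * Y n" and Z: "\<And>n. Z (n+2) = p * Z (n+1) + q * Z n"
    using assms(1,2) unfolding recs_def by auto
  have pos: "Y (int j) = Z (int j) \<and> Y (int j + 1) = Z (int j + 1)" for j
  proof (induction j)
    case 0 then show ?case using assms by simp
  next
    case (Suc j)
    have "Y (int j + 2) = Z (int j + 2)" using Y[of "int j"] Z[of "int j"] Suc.IH by simp
    moreover have "int (Suc j) = int j + 1" "int (Suc j) + 1 = int j + 2" by simp_all
    ultimately show ?case using Suc.IH by (simp only:)
  qed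
  have neg: "Y (- int j) = Z (- int j) \<and> Y (- int j + 1) = Z (- int j + 1)" for j
  proof (induction j)
    case 0 then show ?case using assms by simp
  next
    case (Suc j)
    have "q * Y (- int j - 1) = q * Z (- int j - 1)"
      using Y[of "- int j - 1"] Z[of "- int j - 1"] Suc by (simp add: algebra_simps)
    then have "Y (- int j - 1) = Z (- int j - 1)" using assms(3) by simp
    moreover have "- int (Suc j) = - int j - 1" "- int (Suc j) + 1 = - int j" by simp_all
    ultimately show ?case using Suc.IH by (simp only:)
  qed
  show ?thesis
  proof (cases "n \<ge> 0")
    case True then show ?thesis using pos[of "nat n"] by simp
  next
    case False then show ?thesis using neg[of "nat (-n)"] by simp
  qed
qed

lemma recs_basis:
  assumes "recs p q Y" "q \<noteq> 0"
  shows "Y n = Y 0 * hor p q 1 0 n + Y 1 * hor p q 0 1 n"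
proof -
  have h1: "recs p q (hor p q 1 0)" "recs p q (hor p q 0 1)" using hor_recs[OF assms(2)] by auto
  have r: "recs p q (\<lambda>n. Y 0 * hor p q 1 0 n + Y 1 * hor p q 0 1 n)"
    using h1 unfolding recs_def by (simp add: algebra_simps)
  have v: "hor p q 1 0 0 = 1" "hor p q 0 1 0 = 0" "hor p q 1 0 1 = 0" "hor p q 0 1 1 = 1"
    by (simp_all add: hor_def)
  show ?thesis
    by (rule recs_uniq[OF assms(1) r assms(2)]) (simp_all add: v)
qed

lemma recs_shift: assumes h: "recs p q Y" shows "recs p q (\<lambda>n. Y (n - s))"
  unfolding recs_def
proof
  fix n :: int
  have "Y ((n-s)+2) = p*Y((n-s)+1) + q*Y(n-s)" using h unfolding recs_def by blast
  moreover have "(n-s)+2 = n+2-s" "(n-s)+1 = n+1-s" by simp_all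
  ultimately show "Y (n + 2 - s) = p * Y (n + 1 - s) + q * Y (n - s)" by (simp only:)
qed

lemma gen_det: "(A1*u+B1*v)*(A2*w+B2*z) - (A1*w+B1*z)*(A2*u+B2*v) = (u*z - v*w)*(A1*B2 - B1*(A2::real))"
  by (simp add: algebra_simps)
lemma gen_cross1: "(pa*qb - qa*pb)*pc - (pc*qb - qc*pb)*pa - (pa*qc - qa*pc)*(pb::real) = 0"
  by (simp add: algebra_simps)
lemma gen_cross2: "(pa*qb - qa*pb)*qc - (pc*qb - qc*pb)*qa - (pa*qc - qa*pc)*(qb::real) = 0"
  by (simp add: algebra_simps)
lemma gen_lin: "(D*Ac - D1*Aa - D2*Ab)*u + (D*Bc - D1*Ba - D2*Bb)*v
   = D*(Ac*u + Bc*v) - D1*(Aa*u + Ba*v) - D2*(Ab*u + Bb*(v::real))"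
  by (simp add: algebra_simps)
lemma gen_elim1: "u1 * (ud * ve - vd * ue) = ve * (u1 * ud + u2 * vd) - vd * (u1 * ue + u2 * (ve::real))"
  by (simp add: algebra_simps)
lemma gen_elim2: "u2 * (ud * ve - vd * ue) = ud * (u1 * ue + u2 * ve) - ue * (u1 * ud + u2 * (vd::real))"
  by (simp add: algebra_simps)

lemma three_term:
  fixes X :: "int \<Rightarrow> real" and a b c d e n :: int
  assumes R: "recs p q X" and q: "q \<noteq> 0"
  defines "D \<equiv> X (d - a) * X (e - b) - X (e - a) * X (d - b)"
      and "D1 \<equiv> X (d - c) * X (e - b) - X (e - c) * X (d - b)"
      and "D2 \<equiv> X (d - a) * X (e - c) - X (e - a) * X (d - c)"
  assumes "D \<noteq> 0"
  shows "D * X (n - c) = D1 * X (n - a) + D2 * X (n - b)"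
proof -
  define U where "U = hor p q 1 0"
  define V where "V = hor p q 0 1"
  have B: "X (n' - s) = X (- s) * U n' + X (1 - s) * V n'" for n' s
    using recs_basis[OF recs_shift[OF R, of s] q, of n'] unfolding U_def V_def by simp
  define u1 where "u1 = D * X (-c) - D1 * X (-a) - D2 * X (-b)"
  define u2 where "u2 = D * X (1-c) - D1 * X (1-a) - D2 * X (1-b)"
  have lin: "u1 * U t + u2 * V t = D * X (t - c) - D1 * X (t - a) - D2 * X (t - b)" for t
    unfolding u1_def u2_def B[of t] by (rule gen_lin)
  have ed: "u1 * U d + u2 * V d = 0"
    unfolding lin D_def D1_def D2_def by (rule gen_cross1)
  have ee: "u1 * U e + u2 * V e = 0"
    unfolding lin D_def D1_def D2_def by (rule gen_cross2)
  have "D = (U d * V e - V d * U e) * (X (-a) * X (1-b) - X (1-a) * X (-b))"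
    unfolding D_def B[of d] B[of e] by (rule gen_det)
  with \<open>D \<noteq> 0\<close> have W: "U d * V e - V d * U e \<noteq> 0" by auto
  have u1: "u1 = 0" using gen_elim1[of u1 "U d" "V e" "V d" "U e" u2] ed ee W by simp
  have u2: "u2 = 0" using gen_elim2[of u2 "U d" "V e" "V d" "U e" u1] ed ee W by simp
  have "D * X (n - c) - D1 * X (n - a) - D2 * X (n - b) = 0"
    using lin[of n] u1 u2 by simp
  then show ?thesis by simp
qed

lemma tele_pos: "(\<Sum>r\<in>{a..<a + int j}. G (r+1) - G r) = G (a + int j) - (G a :: real)"
proof (induction j)
  case 0 then show ?case by simp
next
  case (Suc j)
  have "{a..<a + int (Suc j)} = insert (a + int j) {a..<a + int j}" by auto
  moreover have "a + int (Suc j) = a + int j + 1" by simp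
  ultimately show ?case using Suc by (simp only:) simp
qed

lemma isum_tele: "isum (\<lambda>r. G (r+1) - G r) k = G (k+1) - (G 0 :: real)"
proof (cases "k \<ge> 0")
  case True
  have "{0..k} = {0..<0 + int (nat (k+1))}" using True by auto
  then show ?thesis using True tele_pos[of G 0 "nat (k+1)"] by (simp add: isum_def)
next
  case False
  have "{k+1..-1} = {k+1..<(k+1) + int (nat (-k-1))}" using False by auto
  then show ?thesis using False tele_pos[of G "k+1" "nat (-k-1)"] by (simp add: isum_def)
qed

lemma gen_sum:
  fixes t beta :: real and W Y :: "int \<Rightarrow> real"
  assumes t: "t \<noteq> 0" and H: "\<And>r. Y r = beta * (t * W r - W (r - 1))"
  shows "isum (\<lambda>r. t powi r * Y r) k = beta * t powi (k+1) * W k - beta * W (-1)"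
proof -
  define G where "G r = beta * t powi r * W (r - 1)" for r
  have "(\<lambda>r. t powi r * Y r) = (\<lambda>r. G (r+1) - G r)"
  proof
    fix r
    show "t powi r * Y r = G (r+1) - G r"
      unfolding G_def H using power_int_add_1[of t r] t by (simp add: algebra_simps)
  qed
  then show ?thesis using isum_tele[of G k] unfolding G_def by simp
qed

lemma solve1: "(D2::real) \<noteq> 0 \<Longrightarrow> D1 \<noteq> 0 \<Longrightarrow> D*A = D1*B + D2*C \<Longrightarrow> C = D1/D2*(D/D1*A - B)"
  by (simp add: field_simps)
lemma solve2: "(D2::real) \<noteq> 0 \<Longrightarrow> D1 \<noteq> 0 \<Longrightarrow> D*A = D1*C + D2*B \<Longrightarrow> C = D2/D1*(D/D2*A - B)"
  by (simp add: field_simps)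
lemma solve3: "(D::real) \<noteq> 0 \<Longrightarrow> D1 \<noteq> 0 \<Longrightarrow> D*C = D1*B + D2*A \<Longrightarrow> C = - D1/D*(- D2/D1*A - B)"
  apply (simp add: field_simps)
  apply (drule arg_cong[where f="\<lambda>x. x * D1"])
  by (simp add: algebra_simps)
lemma fin1: "(t::real) \<noteq> 0 \<Longrightarrow> beta * t powi (k+1) * Xm - beta * Xw = (beta * t) * t powi k * Xm - beta * Xw"
  by (simp add: power_int_add_1)

lemma hor_cases:
  assumes "X \<in> {Fib, Luc, Jac, JacL, Pell, PellL}"
  shows "\<exists>p q w0 w1. X = hor p q w0 w1 \<and> q \<noteq> (0::real)"
proof -
  have ex: "\<And>p q w0 w1. (q::real) \<noteq> 0 \<Longrightarrow> X = hor p q w0 w1 \<Longrightarrow> \<exists>p q w0 w1. X = hor p q w0 w1 \<and> q \<noteq> 0"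
    by blast
  from assms show ?thesis unfolding Fib_def Luc_def Jac_def JacL_def Pell_def PellL_def
    by (elim insertE emptyE) (rule ex; simp)+
qed

theorem theorem5:
  fixes X :: "int \<Rightarrow> real" and a b c d e k m :: int
  assumes "X \<in> {Fib, Luc, Jac, JacL, Pell, PellL}"
  defines "D \<equiv> X (d - a) * X (e - b) - X (e - a) * X (d - b)"
      and "D1 \<equiv> X (d - c) * X (e - b) - X (e - c) * X (d - b)"
      and "D2 \<equiv> X (d - a) * X (e - c) - X (e - a) * X (d - c)"
  assumes "D \<noteq> 0" and "D1 \<noteq> 0" and "D2 \<noteq> 0"
  shows "isum (\<lambda>r. (D / D1) powi r * X (m - k*(a - c) - b + c + (a - c)*r)) k
           = D / D2 * (D / D1) powi k * X m - D1 / D2 * X (m - (k + 1)*(a - c))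
       \<and> isum (\<lambda>r. (D / D2) powi r * X (m - k*(b - c) - a + c + (b - c)*r)) k
           = D / D1 * (D / D2) powi k * X m - D2 / D1 * X (m - (k + 1)*(b - c))
       \<and> isum (\<lambda>r. (- D2 / D1) powi r * X (m - k*(a - b) + b - c + (a - b)*r)) k
           = D2 / D * (- D2 / D1) powi k * X m + D1 / D * X (m - (k + 1)*(a - b))"
proof -
  obtain p q w0 w1 where Xh: "X = hor p q w0 w1" and q: "q \<noteq> 0"
    using hor_cases[OF assms(1)] by blast
  have R: "recs p q X" using hor_recs[OF q] Xh by simp
  have TT: "D * X (n - c) = D1 * X (n - a) + D2 * X (n - b)" for n
    using three_term[OF R q, where a=a and b=b and c=c and d=d and e=e and n=n] \<open>D \<noteq> 0\<close>
    unfolding D_def D1_def D2_def by blast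
  have nz: "D \<noteq> 0" "D1 \<noteq> 0" "D2 \<noteq> 0" by fact+
  have H1: "X (m - k*(a-c) - b + c + (a-c)*r) = D1/D2 * (D/D1 * X (m-(k-r)*(a-c)) - X (m-(k-(r-1))*(a-c)))" for r
  proof -
    define n where "n = m - k*(a-c) + c + (a-c)*r"
    have e: "n - c = m-(k-r)*(a-c)" "n - a = m-(k-(r-1))*(a-c)" "n - b = m - k*(a-c) - b + c + (a-c)*r"
      unfolding n_def by (simp_all add: algebra_simps)
    have "D * X (m-(k-r)*(a-c)) = D1 * X (m-(k-(r-1))*(a-c)) + D2 * X (m - k*(a-c) - b + c + (a-c)*r)"
      using TT[of n] by (simp only: e)
    then show ?thesis by (rule solve1[OF nz(3) nz(2)])
  qed
  have t1: "D/D1 \<noteq> 0" using nz by simp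
  note S1 = gen_sum[where Y="\<lambda>r. X (m - k*(a-c) - b + c + (a-c)*r)" and W="\<lambda>r. X (m-(k-r)*(a-c))"
      and beta="D1/D2" and t="D/D1" and k=k, OF t1 H1]
  have F1: "isum (\<lambda>r. (D / D1) powi r * X (m - k*(a - c) - b + c + (a - c)*r)) k
           = D / D2 * (D / D1) powi k * X m - D1 / D2 * X (m - (k + 1)*(a - c))"
    using S1 fin1 nz by (simp add: power_int_add_1)
  have H2: "X (m - k*(b-c) - a + c + (b-c)*r) = D2/D1 * (D/D2 * X (m-(k-r)*(b-c)) - X (m-(k-(r-1))*(b-c)))" for r
  proof -
    define n where "n = m - k*(b-c) + c + (b-c)*r"
    have e: "n - c = m-(k-r)*(b-c)" "n - b = m-(k-(r-1))*(b-c)" "n - a = m - k*(b-c) - a + c + (b-c)*r"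
      unfolding n_def by (simp_all add: algebra_simps)
    have "D * X (m-(k-r)*(b-c)) = D1 * X (m - k*(b-c) - a + c + (b-c)*r) + D2 * X (m-(k-(r-1))*(b-c))"
      using TT[of n] by (simp only: e)
    then show ?thesis by (rule solve2[OF nz(3) nz(2)])
  qed
  have t2: "D/D2 \<noteq> 0" using nz by simp
  note S2 = gen_sum[where Y="\<lambda>r. X (m - k*(b-c) - a + c + (b-c)*r)" and W="\<lambda>r. X (m-(k-r)*(b-c))"
      and beta="D2/D1" and t="D/D2" and k=k, OF t2 H2]
  have F2: "isum (\<lambda>r. (D / D2) powi r * X (m - k*(b - c) - a + c + (b - c)*r)) k
           = D / D1 * (D / D2) powi k * X m - D2 / D1 * X (m - (k + 1)*(b - c))"
    using S2 nz by (simp add: power_int_add_1)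
  have H3: "X (m - k*(a-b) + b - c + (a-b)*r) = - D1/D * (- D2/D1 * X (m-(k-r)*(a-b)) - X (m-(k-(r-1))*(a-b)))" for r
  proof -
    define n where "n = m - k*(a-b) + b + (a-b)*r"
    have e: "n - b = m-(k-r)*(a-b)" "n - a = m-(k-(r-1))*(a-b)" "n - c = m - k*(a-b) + b - c + (a-b)*r"
      unfolding n_def by (simp_all add: algebra_simps)
    have "D * X (m - k*(a-b) + b - c + (a-b)*r) = D1 * X (m-(k-(r-1))*(a-b)) + D2 * X (m-(k-r)*(a-b))"
      using TT[of n] by (simp only: e)
    then show ?thesis by (rule solve3[OF nz(1) nz(2)])
  qed
  have t3: "- D2/D1 \<noteq> 0" using nz by simp
  note S3 = gen_sum[where Y="\<lambda>r. X (m - k*(a-b) + b - c + (a-b)*r)" and W="\<lambda>r. X (m-(k-r)*(a-b))"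
      and beta="- D1/D" and t="- D2/D1" and k=k, OF t3 H3]
  have F3: "isum (\<lambda>r. (- D2 / D1) powi r * X (m - k*(a - b) + b - c + (a - b)*r)) k
           = D2 / D * (- D2 / D1) powi k * X m + D1 / D * X (m - (k + 1)*(a - b))"
    using S3 nz by (simp add: power_int_add_1)
  show ?thesis using F1 F2 F3 by blast
qed

end
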